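(* Let $\varepsilon\in(0,\frac12)$. For all sufficiently large $n$ and all $k\le n$, $$|\mathsf{FewBranchHSW}^n_k|\le\exp\big(8n^{1/2-\varepsilon}\log n\big)\,\mu^k .$$
   Context: On $\mathbb{Z}^2$ with connective constant $\mu$, $\mathsf{HSW}_k$ denotes half-space walks of length $k$ (self-avoiding, $\gamma_0=O$, $y(\gamma_t)>0$ for $t>0$). Branch decomposition of $\gamma\in\mathsf{HSW}_k$: set $a_0=0$; for $i\ge1$ odd let $a_i$ be the largest $t\in[a_{i-1},k]$ with $y(\gamma_t)=\max_{s\in[a_{i-1},k]}y(\gamma_s)$, and for $i\ge2$ even let $a_i$ be the largest $t\in[a_{i-1},k]$ with $y(\gamma_t)=\min_{s\in[a_{i-1},k]}y(\gamma_s)$; stop at the first $r$ with $a_r=k$. The subwalks $\gamma_{[a_{i},a_{i+1}]}$, $0\le i<r$, are the branches of $\gamma$, and $r$ is its number of branches. $\mathsf{FewBranchHSW}^n_k$ is the set of $\gamma\in\mathsf{HSW}_k$ with fewer than $7n^{1/2-\varepsilon}$ branches. *)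

theory Defs
  imports Complex_Main
begin

type_synonym pt = "int \<times> int"

definition adj :: "pt \<Rightarrow> pt \<Rightarrow> bool" where
  "adj p q \<longleftrightarrow> \<bar>fst p - fst q\<bar> + \<bar>snd p - snd q\<bar> = 1"

text \<open>A walk of length k is a list of k+1 points gamma_0,...,gamma_k.\<close>
definition SAW :: "nat \<Rightarrow> pt list set" where
  "SAW k = {\<gamma>. length \<gamma> = Suc k \<and> \<gamma> ! 0 = (0,0) \<and>
      (\<forall>t<k. adj (\<gamma> ! t) (\<gamma> ! Suc t)) \<and> distinct \<gamma>}"

definition conn_const :: real where
  "conn_const = lim (\<lambda>n. root n (real (card (SAW n))))"

definition HSW :: "nat \<Rightarrow> pt list set" where
  "HSW k = {\<gamma> \<in> SAW k. \<forall>t. 0 < t \<and> t \<le> k \<longrightarrow> snd (\<gamma> ! t) > 0}"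

fun bpt :: "pt list \<Rightarrow> nat \<Rightarrow> nat" where
  "bpt \<gamma> 0 = 0"
| "bpt \<gamma> (Suc i) =
    (let a = bpt \<gamma> i; k = length \<gamma> - 1; y = (\<lambda>s. snd (\<gamma> ! s));
         m = (if odd (Suc i) then Max (y ` {a..k}) else Min (y ` {a..k}))
     in GREATEST t. a \<le> t \<and> t \<le> k \<and> y t = m)"

definition num_branches :: "pt list \<Rightarrow> nat" where
  "num_branches \<gamma> = (LEAST r. bpt \<gamma> r = length \<gamma> - 1)"

definition FewBranchHSW :: "real \<Rightarrow> nat \<Rightarrow> nat \<Rightarrow> pt list set" where
  "FewBranchHSW \<epsilon> n k = {\<gamma> \<in> HSW k. real (num_branches \<gamma>) < 7 * real n powr (1/2 - \<epsilon>)}"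

end

theory Submission
  imports Defs
begin


lemma bpt_Suc_props:
  fixes \<gamma> :: "pt list" and i :: nat
  defines "k \<equiv> length \<gamma> - 1"
  defines "y \<equiv> (\<lambda>s. snd (\<gamma> ! s))"
  defines "\<sigma> \<equiv> ((-1)::int) ^ i"
  assumes a: "bpt \<gamma> i \<le> k"
  shows "bpt \<gamma> i \<le> bpt \<gamma> (Suc i) \<and> bpt \<gamma> (Suc i) \<le> k
     \<and> (\<forall>u. bpt \<gamma> i \<le> u \<and> u \<le> k \<longrightarrow> \<sigma> * y u \<le> \<sigma> * y (bpt \<gamma> (Suc i)))
     \<and> (\<forall>u. bpt \<gamma> (Suc i) < u \<and> u \<le> k \<longrightarrow> \<sigma> * y u < \<sigma> * y (bpt \<gamma> (Suc i)))"
proof -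
  define a where "a = bpt \<gamma> i"
  define m where "m = (if odd (Suc i) then Max (y ` {a..k}) else Min (y ` {a..k}))"
  have eq: "bpt \<gamma> (Suc i) = (GREATEST t. a \<le> t \<and> t \<le> k \<and> y t = m)"
    by (simp add: a_def m_def k_def y_def Let_def)
  have fin: "finite (y ` {a..k})" and ne: "y ` {a..k} \<noteq> {}" using a by (auto simp: a_def)
  have mem: "m \<in> y ` {a..k}" using fin ne by (simp add: m_def)
  then obtain t0 where t0: "a \<le> t0" "t0 \<le> k" "y t0 = m" by auto
  have bnd: "\<forall>t. (a \<le> t \<and> t \<le> k \<and> y t = m) \<longrightarrow> t \<le> k" by auto
  have G: "a \<le> bpt \<gamma> (Suc i) \<and> bpt \<gamma> (Suc i) \<le> k \<and> y (bpt \<gamma> (Suc i)) = m"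
    unfolding eq using GreatestI_nat[of "\<lambda>t. a \<le> t \<and> t \<le> k \<and> y t = m" t0 k] t0 bnd by blast
  have G2: "\<And>t. a \<le> t \<Longrightarrow> t \<le> k \<Longrightarrow> y t = m \<Longrightarrow> t \<le> bpt \<gamma> (Suc i)"
    unfolding eq using Greatest_le_nat[of "\<lambda>t. a \<le> t \<and> t \<le> k \<and> y t = m" _ k] bnd by blast
  have le: "\<forall>u. a \<le> u \<and> u \<le> k \<longrightarrow> \<sigma> * y u \<le> \<sigma> * m"
  proof (cases "even i")
    case True
    then have "\<sigma> = 1" "m = Max (y ` {a..k})" by (simp_all add: \<sigma>_def m_def)
    then show ?thesis using fin by auto
  next
    case False
    then have "\<sigma> = -1" "m = Min (y ` {a..k})" by (simp_all add: \<sigma>_def m_def)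
    then show ?thesis using fin by auto
  qed
  have s1: "\<sigma> = 1 \<or> \<sigma> = -1" by (simp add: \<sigma>_def minus_one_power_iff)
  have lt: "\<forall>u. bpt \<gamma> (Suc i) < u \<and> u \<le> k \<longrightarrow> \<sigma> * y u < \<sigma> * m"
  proof (intro allI impI)
    fix u assume u: "bpt \<gamma> (Suc i) < u \<and> u \<le> k"
    then have "a \<le> u" using G by auto
    then have "\<sigma> * y u \<le> \<sigma> * m" using le u by auto
    moreover have "y u \<noteq> m" using G2[of u] u \<open>a \<le> u\<close> by auto
    ultimately show "\<sigma> * y u < \<sigma> * m" using s1 by auto
  qed
  show ?thesis using G le lt by (auto simp: a_def)
qed

declare bpt.simps(2)[simp del]

lemma bpt_le: "bpt \<gamma> i \<le> length \<gamma> - 1"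
proof (induction i)
  case 0 then show ?case by simp
next
  case (Suc i) then show ?case using bpt_Suc_props[of \<gamma> i] by auto
qed

lemma bpt_Suc_ge: "bpt \<gamma> i \<le> bpt \<gamma> (Suc i)"
  using bpt_Suc_props[of \<gamma> i] bpt_le[of \<gamma> i] by auto

lemma bpt_mono: "i \<le> j \<Longrightarrow> bpt \<gamma> i \<le> bpt \<gamma> j"
  by (induction j rule: dec_induct) (auto intro: order_trans bpt_Suc_ge)

lemma bpt_le2: "\<forall>u. bpt \<gamma> i \<le> u \<and> u \<le> length \<gamma> - 1 \<longrightarrow>
   ((-1::int)^i) * snd (\<gamma>!u) \<le> ((-1::int)^i) * snd (\<gamma> ! bpt \<gamma> (Suc i))"
  using bpt_Suc_props[of \<gamma> i] bpt_le[of \<gamma> i] by auto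

lemma bpt_lt2: "\<forall>u. bpt \<gamma> (Suc i) < u \<and> u \<le> length \<gamma> - 1 \<longrightarrow>
   ((-1::int)^i) * snd (\<gamma>!u) < ((-1::int)^i) * snd (\<gamma> ! bpt \<gamma> (Suc i))"
  using bpt_Suc_props[of \<gamma> i] bpt_le[of \<gamma> i] by auto

lemma bpt_progress:
  assumes "bpt \<gamma> i < length \<gamma> - 1"
  shows "bpt \<gamma> i < bpt \<gamma> (Suc (Suc i))"
proof (rule ccontr)
  let ?k = "length \<gamma> - 1"
  let ?y = "\<lambda>s. snd (\<gamma> ! s)"
  assume "\<not> ?thesis"
  then have e: "bpt \<gamma> (Suc i) = bpt \<gamma> i" "bpt \<gamma> (Suc (Suc i)) = bpt \<gamma> i"
    using bpt_Suc_ge[of \<gamma> i] bpt_Suc_ge[of \<gamma> "Suc i"] by auto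
  have "((-1::int)^i) * ?y ?k < ((-1::int)^i) * ?y (bpt \<gamma> i)"
    using bpt_lt2[of \<gamma> i] assms e by auto
  moreover have "((-1::int)^Suc i) * ?y ?k \<le> ((-1::int)^Suc i) * ?y (bpt \<gamma> i)"
    using bpt_le2[of \<gamma> "Suc i"] assms e by auto
  ultimately show False by simp
qed

lemma bpt_even_ge: "min j (length \<gamma> - 1) \<le> bpt \<gamma> (2*j)"
proof (induction j)
  case 0 then show ?case by simp
next
  case (Suc j)
  show ?case
  proof (cases "bpt \<gamma> (2*j) < length \<gamma> - 1")
    case True
    then have "bpt \<gamma> (2*j) < bpt \<gamma> (2 * Suc j)" using bpt_progress[of \<gamma> "2*j"] by simp
    then show ?thesis using Suc by linarith
  next
    case False
    then have "bpt \<gamma> (2*j) = length \<gamma> - 1" using bpt_le[of \<gamma> "2*j"] by linarith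
    moreover have "bpt \<gamma> (2*j) \<le> bpt \<gamma> (2 * Suc j)" by (rule bpt_mono) simp
    ultimately show ?thesis by linarith
  qed
qed

lemma bpt_reaches: "bpt \<gamma> (2 * (length \<gamma> - 1)) = length \<gamma> - 1"
  using bpt_even_ge[of "length \<gamma> - 1" \<gamma>] bpt_le[of \<gamma>] by (metis le_antisym min.idem)

lemma nb_props: "bpt \<gamma> (num_branches \<gamma>) = length \<gamma> - 1"
  unfolding num_branches_def by (rule LeastI[of _ "2 * (length \<gamma> - 1)"]) (rule bpt_reaches)

lemma after_nb: "num_branches \<gamma> \<le> i \<Longrightarrow> bpt \<gamma> i = length \<gamma> - 1"
  using bpt_mono[of "num_branches \<gamma>" i \<gamma>] nb_props[of \<gamma>] bpt_le[of \<gamma> i] by auto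

definition sgA :: "nat list \<Rightarrow> nat \<Rightarrow> int" where
  "sgA A u = (-1) ^ length (filter (\<lambda>a. a \<le> u) A)"

definition Yf :: "nat list \<Rightarrow> pt list \<Rightarrow> nat \<Rightarrow> int" where
  "Yf A \<gamma> t = (\<Sum>u<t. sgA A u * (snd (\<gamma> ! Suc u) - snd (\<gamma> ! u)))"

definition Aof :: "pt list \<Rightarrow> nat list" where
  "Aof \<gamma> = map (bpt \<gamma>) [1..<Suc (num_branches \<gamma>)]"

definition psi :: "pt list \<Rightarrow> pt list" where
  "psi \<gamma> = map (\<lambda>t. (fst (\<gamma> ! t), Yf (Aof \<gamma>) \<gamma> t)) [0..<length \<gamma>]"

definition Bridge :: "nat \<Rightarrow> pt list set" where
  "Bridge k = {\<beta> \<in> SAW k. \<forall>t. 0 < t \<and> t \<le> k \<longrightarrow> 0 < snd (\<beta> ! t) \<and> snd (\<beta> ! t) \<le> snd (\<beta> ! k)}"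

lemma sgA_branch:
  assumes "bpt \<gamma> i \<le> u" "u < bpt \<gamma> (Suc i)"
  shows "sgA (Aof \<gamma>) u = (-1)^i"
proof -
  let ?nb = "num_branches \<gamma>"
  have inb: "i < ?nb"
  proof (rule ccontr)
    assume "\<not> i < ?nb"
    then have "bpt \<gamma> i = bpt \<gamma> (Suc i)" using after_nb[of \<gamma> i] after_nb[of \<gamma> "Suc i"] by auto
    then show False using assms by auto
  qed
  have "length (filter (\<lambda>a. a \<le> u) (Aof \<gamma>)) = card {j. j < ?nb \<and> bpt \<gamma> (Suc j) \<le> u}"
  proof -
    have l: "length (Aof \<gamma>) = ?nb" by (simp add: Aof_def)
    have n: "\<And>j. j < ?nb \<Longrightarrow> Aof \<gamma> ! j = bpt \<gamma> (Suc j)"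
      by (simp add: Aof_def del: upt_Suc)
    show ?thesis unfolding length_filter_conv_card l
      by (rule arg_cong[where f=card]) (auto simp: n)
  qed
  also have "{j. j < ?nb \<and> bpt \<gamma> (Suc j) \<le> u} = {..<i}"
  proof (intro set_eqI iffI)
    fix j assume j: "j \<in> {j. j < ?nb \<and> bpt \<gamma> (Suc j) \<le> u}"
    show "j \<in> {..<i}"
    proof (rule ccontr)
      assume "j \<notin> {..<i}"
      then have "bpt \<gamma> (Suc i) \<le> bpt \<gamma> (Suc j)" by (intro bpt_mono) auto
      then show False using j assms by auto
    qed
  next
    fix j assume "j \<in> {..<i}"
    then have "j < ?nb" "bpt \<gamma> (Suc j) \<le> bpt \<gamma> i" using inb by (auto intro: bpt_mono)
    then show "j \<in> {j. j < ?nb \<and> bpt \<gamma> (Suc j) \<le> u}" using assms by auto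
  qed
  finally show ?thesis by (simp add: sgA_def)
qed

lemma Yf_branch:
  assumes "bpt \<gamma> i \<le> t" "t \<le> bpt \<gamma> (Suc i)"
  shows "Yf (Aof \<gamma>) \<gamma> t = Yf (Aof \<gamma>) \<gamma> (bpt \<gamma> i) + (-1)^i * (snd (\<gamma>!t) - snd (\<gamma> ! bpt \<gamma> i))"
  using assms
proof (induction t rule: dec_induct)
  case base then show ?case by simp
next
  case (step t)
  have "sgA (Aof \<gamma>) t = (-1)^i" using step by (intro sgA_branch) auto
  then show ?case using step by (simp add: Yf_def algebra_simps)
qed

lemma HSW_facts:
  assumes "\<gamma> \<in> HSW k"
  shows "length \<gamma> = Suc k" "\<gamma> ! 0 = (0,0)" "\<And>t. t < k \<Longrightarrow> adj (\<gamma> ! t) (\<gamma> ! Suc t)"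
    "distinct \<gamma>" "\<And>t. 0 < t \<Longrightarrow> t \<le> k \<Longrightarrow> 0 < snd (\<gamma> ! t)"
  using assms by (auto simp: HSW_def SAW_def)

lemma lower_strict:
  assumes "\<gamma> \<in> HSW k" "bpt \<gamma> i < u" "u \<le> k"
  shows "0 < (-1::int)^i * (snd (\<gamma>!u) - snd (\<gamma> ! bpt \<gamma> i))"
proof (cases i)
  case 0 then show ?thesis using HSW_facts[OF assms(1)] assms by simp
next
  case (Suc j)
  have "(-1::int)^j * snd (\<gamma>!u) < (-1)^j * snd (\<gamma> ! bpt \<gamma> (Suc j))"
    using bpt_lt2[of \<gamma> j] assms Suc HSW_facts(1)[OF assms(1)] by auto
  then show ?thesis using Suc by (simp add: algebra_simps)
qed

lemma Q_induct:
  assumes H: "\<gamma> \<in> HSW k"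
  defines "Y \<equiv> Yf (Aof \<gamma>) \<gamma>"
  shows "(\<forall>u. u \<le> bpt \<gamma> i \<longrightarrow> 0 \<le> Y u \<and> Y u \<le> Y (bpt \<gamma> i))
       \<and> (\<forall>u. 0 < u \<and> u \<le> bpt \<gamma> i \<longrightarrow> 0 < Y u)
       \<and> (\<forall>u v. u < v \<and> v \<le> bpt \<gamma> i \<longrightarrow> (fst (\<gamma>!u), Y u) \<noteq> (fst (\<gamma>!v), Y v))"
proof (induction i)
  case 0 then show ?case by (auto simp: Y_def Yf_def)
next
  case (Suc i)
  note F = HSW_facts[OF H]
  let ?a = "bpt \<gamma> i" and ?b = "bpt \<gamma> (Suc i)"
  have ab: "?a \<le> ?b" "?b \<le> k" using bpt_Suc_ge[of \<gamma> i] bpt_le[of \<gamma> "Suc i"] F(1) by auto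
  have Yb: "\<And>t. ?a \<le> t \<Longrightarrow> t \<le> ?b \<Longrightarrow> Y t = Y ?a + (-1)^i * (snd (\<gamma>!t) - snd (\<gamma> ! ?a))"
    unfolding Y_def by (rule Yf_branch)
  have up: "\<And>t. ?a \<le> t \<Longrightarrow> t \<le> ?b \<Longrightarrow> Y t \<le> Y ?b"
  proof -
    fix t assume t: "?a \<le> t" "t \<le> ?b"
    have "(-1::int)^i * snd (\<gamma>!t) \<le> (-1)^i * snd (\<gamma> ! ?b)"
      using bpt_le2[of \<gamma> i] t ab F(1) by auto
    then show "Y t \<le> Y ?b" using Yb[OF t] Yb[of ?b] ab by (simp add: algebra_simps)
  qed
  have lo: "\<And>t. ?a < t \<Longrightarrow> t \<le> ?b \<Longrightarrow> Y ?a < Y t"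
  proof -
    fix t assume t: "?a < t" "t \<le> ?b"
    have "0 < (-1::int)^i * (snd (\<gamma>!t) - snd (\<gamma> ! ?a))"
      using lower_strict[OF H, of i t] t ab by auto
    then show "Y ?a < Y t" using Yb[of t] t by auto
  qed
  have Ya0: "0 \<le> Y ?a" using Suc.IH by auto
  have A: "\<forall>u. u \<le> ?b \<longrightarrow> 0 \<le> Y u \<and> Y u \<le> Y ?b"
  proof (intro allI impI)
    fix u assume u: "u \<le> ?b"
    show "0 \<le> Y u \<and> Y u \<le> Y ?b"
    proof (cases "u \<le> ?a")
      case True
      then have "0 \<le> Y u \<and> Y u \<le> Y ?a" using Suc.IH by auto
      moreover have "Y ?a \<le> Y ?b" using up[of ?a] ab by auto
      ultimately show ?thesis by auto
    next
      case False
      then show ?thesis using lo[of u] up[of u] u Ya0 by auto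
    qed
  qed
  have B: "\<forall>u. 0 < u \<and> u \<le> ?b \<longrightarrow> 0 < Y u"
  proof (intro allI impI)
    fix u assume u: "0 < u \<and> u \<le> ?b"
    show "0 < Y u"
    proof (cases "u \<le> ?a")
      case True then show ?thesis using Suc.IH u by auto
    next
      case False then show ?thesis using lo[of u] u Ya0 by auto
    qed
  qed
  have C: "\<forall>u v. u < v \<and> v \<le> ?b \<longrightarrow> (fst (\<gamma>!u), Y u) \<noteq> (fst (\<gamma>!v), Y v)"
  proof (intro allI impI)
    fix u v assume uv: "u < v \<and> v \<le> ?b"
    show "(fst (\<gamma>!u), Y u) \<noteq> (fst (\<gamma>!v), Y v)"
    proof (cases "v \<le> ?a")
      case True then show ?thesis using Suc.IH uv by auto
    next
      case v: False
      show ?thesis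
      proof (cases "u \<le> ?a")
        case True
        then have "Y u \<le> Y ?a" using Suc.IH by auto
        then show ?thesis using lo[of v] v uv by auto
      next
        case False
        show ?thesis
        proof
          assume eq: "(fst (\<gamma>!u), Y u) = (fst (\<gamma>!v), Y v)"
          have s: "(-1::int)^i \<noteq> 0" by simp
          have "snd (\<gamma>!u) = snd (\<gamma>!v)"
            using eq Yb[of u] Yb[of v] False v uv by (auto simp: s)
          then have "\<gamma>!u = \<gamma>!v" using eq by (simp add: prod_eq_iff)
          moreover have "v < length \<gamma>" using uv ab F(1) by auto
          ultimately show False using F(4) uv by (simp add: nth_eq_iff_index_eq)
        qed
      qed
    qed
  qed
  show ?case using A B C by blast
qed

lemma sgA_abs: "\<bar>sgA A u\<bar> = 1"
  by (simp add: sgA_def power_abs)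

lemma psi_nth: "t < length \<gamma> \<Longrightarrow> psi \<gamma> ! t = (fst (\<gamma> ! t), Yf (Aof \<gamma>) \<gamma> t)"
  by (simp add: psi_def)

lemma psi_Bridge:
  assumes H: "\<gamma> \<in> HSW k"
  shows "psi \<gamma> \<in> Bridge k"
proof -
  note F = HSW_facts[OF H]
  define Y where "Y = Yf (Aof \<gamma>) \<gamma>"
  have bk: "bpt \<gamma> (num_branches \<gamma>) = k" using nb_props[of \<gamma>] F(1) by simp
  have Q: "(\<forall>u. u \<le> k \<longrightarrow> 0 \<le> Y u \<and> Y u \<le> Y k)
       \<and> (\<forall>u. 0 < u \<and> u \<le> k \<longrightarrow> 0 < Y u)
       \<and> (\<forall>u v. u < v \<and> v \<le> k \<longrightarrow> (fst (\<gamma>!u), Y u) \<noteq> (fst (\<gamma>!v), Y v))"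
    using Q_induct[OF H, of "num_branches \<gamma>"] unfolding bk Y_def by blast
  have pn: "\<And>t. t \<le> k \<Longrightarrow> psi \<gamma> ! t = (fst (\<gamma> ! t), Y t)"
    using psi_nth F(1) Y_def by auto
  have len: "length (psi \<gamma>) = Suc k" using F(1) by (simp add: psi_def)
  have z: "psi \<gamma> ! 0 = (0,0)" using pn[of 0] F(2) by (simp add: Y_def Yf_def)
  have adjs: "\<forall>t<k. adj (psi \<gamma> ! t) (psi \<gamma> ! Suc t)"
  proof (intro allI impI)
    fix t assume t: "t < k"
    have "Y (Suc t) - Y t = sgA (Aof \<gamma>) t * (snd (\<gamma> ! Suc t) - snd (\<gamma> ! t))"
      by (simp add: Y_def Yf_def)
    then have "\<bar>Y (Suc t) - Y t\<bar> = \<bar>snd (\<gamma> ! Suc t) - snd (\<gamma> ! t)\<bar>"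
      by (simp add: abs_mult sgA_abs)
    then have "\<bar>Y t - Y (Suc t)\<bar> = \<bar>snd (\<gamma> ! t) - snd (\<gamma> ! Suc t)\<bar>"
      by (simp add: abs_minus_commute)
    then show "adj (psi \<gamma> ! t) (psi \<gamma> ! Suc t)"
      using F(3)[OF t] pn[of t] pn[of "Suc t"] t by (simp add: adj_def)
  qed
  have dist: "distinct (psi \<gamma>)"
    unfolding distinct_conv_nth len
  proof (intro allI impI)
    fix i j assume ij: "i < Suc k" "j < Suc k" "i \<noteq> j"
    show "psi \<gamma> ! i \<noteq> psi \<gamma> ! j"
    proof (cases "i < j")
      case True then show ?thesis using Q pn ij by auto
    next
      case False then have "j < i" using ij by auto
      then show ?thesis using Q pn ij by (metis less_Suc_eq_le)
    qed
  qed
  show ?thesis unfolding Bridge_def SAW_def using len z adjs dist Q pn by auto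
qed

lemma encode_inj:
  assumes H: "\<gamma> \<in> HSW k" and H': "\<gamma>' \<in> HSW k"
    and A: "Aof \<gamma> = Aof \<gamma>'" and P: "psi \<gamma> = psi \<gamma>'"
  shows "\<gamma> = \<gamma>'"
proof -
  note F = HSW_facts[OF H] and F' = HSW_facts[OF H']
  have x: "\<And>t. t \<le> k \<Longrightarrow> fst (\<gamma>!t) = fst (\<gamma>'!t) \<and> Yf (Aof \<gamma>) \<gamma> t = Yf (Aof \<gamma>) \<gamma>' t"
    using P psi_nth[of _ \<gamma>] psi_nth[of _ \<gamma>'] F(1) F'(1) A
    by (metis Pair_inject le_imp_less_Suc)
  have y: "\<And>t. t \<le> k \<Longrightarrow> snd (\<gamma>!t) = snd (\<gamma>'!t)"
  proof -
    fix t assume "t \<le> k"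
    then show "snd (\<gamma>!t) = snd (\<gamma>'!t)"
    proof (induction t)
      case 0 then show ?case using F(2) F'(2) by simp
    next
      case (Suc t)
      have "Yf (Aof \<gamma>) \<gamma> (Suc t) - Yf (Aof \<gamma>) \<gamma> t = Yf (Aof \<gamma>) \<gamma>' (Suc t) - Yf (Aof \<gamma>) \<gamma>' t"
        using x[of t] x[of "Suc t"] Suc.prems by simp
      then have "sgA (Aof \<gamma>) t * (snd (\<gamma> ! Suc t) - snd (\<gamma> ! t))
               = sgA (Aof \<gamma>) t * (snd (\<gamma>' ! Suc t) - snd (\<gamma>' ! t))"
        by (simp add: Yf_def)
      moreover have "sgA (Aof \<gamma>) t \<noteq> 0" using sgA_abs[of "Aof \<gamma>" t] by auto
      ultimately have "snd (\<gamma> ! Suc t) - snd (\<gamma> ! t) = snd (\<gamma>' ! Suc t) - snd (\<gamma>' ! t)"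
        by simp
      then show ?case using Suc by simp
    qed
  qed
  show ?thesis
  proof (rule nth_equalityI)
    show "length \<gamma> = length \<gamma>'" using F(1) F'(1) by simp
    fix t assume "t < length \<gamma>"
    then have "t \<le> k" using F(1) by simp
    then show "\<gamma> ! t = \<gamma>' ! t" using x y by (simp add: prod_eq_iff)
  qed
qed



definition tr :: "pt \<Rightarrow> pt \<Rightarrow> pt" where "tr d p = (fst p + fst d, snd p + snd d)"
definition untr :: "pt \<Rightarrow> pt \<Rightarrow> pt" where "untr d p = (fst p - fst d, snd p - snd d)"

lemma tr_untr[simp]: "tr d (untr d p) = p" "untr d (tr d p) = p"
  by (auto simp: tr_def untr_def)
lemma adj_tr[simp]: "adj (tr d p) (tr d q) = adj p q" by (simp add: adj_def tr_def)
lemma adj_untr[simp]: "adj (untr d p) (untr d q) = adj p q" by (simp add: adj_def untr_def)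
lemma inj_tr: "inj (tr d)" by (metis injI tr_untr(2))
lemma inj_untr: "inj (untr d)" by (metis injI tr_untr(1))

lemma SAW_coord:
  assumes "\<gamma> \<in> SAW k" "t \<le> k"
  shows "\<bar>fst (\<gamma>!t)\<bar> \<le> int t \<and> \<bar>snd (\<gamma>!t)\<bar> \<le> int t"
  using assms(2)
proof (induction t)
  case 0 then show ?case using assms(1) by (simp add: SAW_def)
next
  case (Suc t)
  then have "adj (\<gamma>!t) (\<gamma>!Suc t)" using assms(1) by (simp add: SAW_def)
  then show ?case using Suc by (auto simp: adj_def)
qed

lemma finite_SAW: "finite (SAW k)"
proof -
  let ?B = "{-int k..int k} \<times> {-int k..int k}"
  have "SAW k \<subseteq> {xs. set xs \<subseteq> ?B \<and> length xs = Suc k}"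
  proof
    fix \<gamma> assume g: "\<gamma> \<in> SAW k"
    have "set \<gamma> \<subseteq> ?B"
    proof
      fix p assume "p \<in> set \<gamma>"
      then obtain t where t: "t < length \<gamma>" "p = \<gamma>!t" by (auto simp: in_set_conv_nth)
      then have "t \<le> k" using g by (simp add: SAW_def)
      then have "\<bar>fst p\<bar> \<le> int k \<and> \<bar>snd p\<bar> \<le> int k" using SAW_coord[OF g, of t] t by auto
      then show "p \<in> ?B" by (cases p) auto
    qed
    then show "\<gamma> \<in> {xs. set xs \<subseteq> ?B \<and> length xs = Suc k}" using g by (simp add: SAW_def)
  qed
  moreover have "finite {xs. set xs \<subseteq> ?B \<and> length xs = Suc k}"
    by (rule finite_lists_length_eq) simp
  ultimately show ?thesis by (rule finite_subset)
qed

lemma finite_Bridge: "finite (Bridge k)"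
  using finite_SAW[of k] by (rule finite_subset[rotated]) (auto simp: Bridge_def)

definition straight :: "nat \<Rightarrow> pt list" where
  "straight k = map (\<lambda>t. (0, int t)) [0..<Suc k]"

lemma straight_Bridge: "straight k \<in> Bridge k"
  unfolding Bridge_def SAW_def straight_def
  by (auto simp: adj_def distinct_map inj_on_def nth_append simp del: upt_Suc)

lemma Bridge_SAW: "Bridge k \<subseteq> SAW k" by (auto simp: Bridge_def)

lemma card_Bridge_pos: "1 \<le> card (Bridge k)"
  using straight_Bridge[of k] finite_Bridge[of k]
  by (metis One_nat_def Suc_leI card_gt_0_iff empty_iff)

lemma card_Bridge_le_SAW: "card (Bridge k) \<le> card (SAW k)"
  by (rule card_mono[OF finite_SAW Bridge_SAW])

lemma SAW_submult: "card (SAW (m+n)) \<le> card (SAW m) * card (SAW n)"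
proof -
  define f where "f = (\<lambda>\<gamma>::pt list. (take (Suc m) \<gamma>, map (untr (\<gamma>!m)) (drop m \<gamma>)))"
  have into: "f ` SAW (m+n) \<subseteq> SAW m \<times> SAW n"
  proof
    fix p assume "p \<in> f ` SAW (m+n)"
    then obtain \<gamma> where g: "\<gamma> \<in> SAW (m+n)" and p: "p = f \<gamma>" by auto
    have len: "length \<gamma> = Suc (m+n)" and z: "\<gamma>!0 = (0,0)" and ad: "\<forall>t<m+n. adj (\<gamma>!t) (\<gamma>!Suc t)"
      and d: "distinct \<gamma>" using g by (auto simp: SAW_def)
    have 1: "take (Suc m) \<gamma> \<in> SAW m"
      unfolding SAW_def using len z ad d by auto
    have ad2: "\<forall>t<n. adj (map (untr (\<gamma>!m)) (drop m \<gamma>) ! t) (map (untr (\<gamma>!m)) (drop m \<gamma>) ! Suc t)"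
    proof (intro allI impI)
      fix t assume "t < n"
      then show "adj (map (untr (\<gamma>!m)) (drop m \<gamma>) ! t) (map (untr (\<gamma>!m)) (drop m \<gamma>) ! Suc t)"
        using ad[rule_format, of "m+t"] len by simp
    qed
    have 2: "map (untr (\<gamma>!m)) (drop m \<gamma>) \<in> SAW n"
      unfolding SAW_def using len ad2 d inj_untr
      by (auto simp: distinct_map inj_on_def untr_def)
    show "p \<in> SAW m \<times> SAW n" using 1 2 p f_def by simp
  qed
  have inj: "inj_on f (SAW (m+n))"
  proof (rule inj_onI)
    fix \<gamma> \<gamma>' assume g: "\<gamma> \<in> SAW (m+n)" and g': "\<gamma>' \<in> SAW (m+n)" and e: "f \<gamma> = f \<gamma>'"
    have len: "length \<gamma> = Suc (m+n)" "length \<gamma>' = Suc (m+n)" using g g' by (auto simp: SAW_def)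
    have t: "take (Suc m) \<gamma> = take (Suc m) \<gamma>'" using e f_def by simp
    then have gm: "\<gamma>!m = \<gamma>'!m" using len by (metis lessI nth_take)
    have "map (untr (\<gamma>!m)) (drop m \<gamma>) = map (untr (\<gamma>!m)) (drop m \<gamma>')" using e f_def gm by simp
    then have dr: "drop m \<gamma> = drop m \<gamma>'" using inj_untr by (simp add: inj_map_eq_map)
    have "take m \<gamma> = take m \<gamma>'" using t by (metis min.absorb1 le_SucI order_refl take_take)
    then show "\<gamma> = \<gamma>'" using dr by (metis append_take_drop_id)
  qed
  have "card (SAW (m+n)) \<le> card (SAW m \<times> SAW n)"
    by (rule card_inj_on_le[OF inj into]) (simp add: finite_SAW)
  then show ?thesis by (simp add: card_cartesian_product)
qed

definition bcat :: "pt list \<Rightarrow> pt list \<Rightarrow> pt list" where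
  "bcat b1 b2 = b1 @ map (tr (last b1)) (tl b2)"

lemma bcat_nth:
  assumes "length b1 = Suc m" "length b2 = Suc n" "b2 ! 0 = (0,0)" "t \<le> m+n"
  shows "bcat b1 b2 ! t = (if t \<le> m then b1 ! t else tr (b1!m) (b2!(t-m)))"
proof (cases "t \<le> m")
  case True then show ?thesis using assms by (simp add: bcat_def nth_append)
next
  case False
  have "b1 \<noteq> []" using assms(1) by auto
  then have l: "last b1 = b1 ! m" using assms(1) by (simp add: last_conv_nth)
  have "tl b2 ! (t - Suc m) = b2 ! (t - m)" using False assms
    by (simp add: nth_tl Suc_diff_Suc)
  then show ?thesis using False assms l by (simp add: bcat_def nth_append nth_tl)
qed

lemma bcat_nth2:
  assumes "length b1 = Suc m" "length b2 = Suc n" "b2 ! 0 = (0,0)" "m \<le> t" "t \<le> m+n"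
  shows "bcat b1 b2 ! t = tr (b1!m) (b2!(t-m))"
  using bcat_nth[OF assms(1-3) assms(5)] assms(3,4) by (cases "t = m") (auto simp: tr_def)

lemma Bridge_facts:
  assumes "\<beta> \<in> Bridge k"
  shows "length \<beta> = Suc k" "\<beta> ! 0 = (0,0)" "\<And>t. t < k \<Longrightarrow> adj (\<beta> ! t) (\<beta> ! Suc t)"
    "distinct \<beta>" "\<And>t. 0 < t \<Longrightarrow> t \<le> k \<Longrightarrow> 0 < snd (\<beta> ! t)"
    "\<And>t. t \<le> k \<Longrightarrow> snd (\<beta> ! t) \<le> snd (\<beta> ! k)" "\<And>t. t \<le> k \<Longrightarrow> 0 \<le> snd (\<beta> ! t)"
proof -
  show "length \<beta> = Suc k" "\<beta> ! 0 = (0,0)" "\<And>t. t < k \<Longrightarrow> adj (\<beta> ! t) (\<beta> ! Suc t)"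
    "distinct \<beta>" "\<And>t. 0 < t \<Longrightarrow> t \<le> k \<Longrightarrow> 0 < snd (\<beta> ! t)"
    using assms by (auto simp: Bridge_def SAW_def)
  have z: "snd (\<beta>!0) = 0" using assms by (auto simp: Bridge_def SAW_def)
  show pos: "\<And>t. t \<le> k \<Longrightarrow> 0 \<le> snd (\<beta> ! t)"
  proof -
    fix t assume "t \<le> k"
    then show "0 \<le> snd (\<beta> ! t)" using assms z by (cases "t = 0") (auto simp: Bridge_def)
  qed
  show "\<And>t. t \<le> k \<Longrightarrow> snd (\<beta> ! t) \<le> snd (\<beta> ! k)"
  proof -
    fix t assume "t \<le> k"
    then show "snd (\<beta> ! t) \<le> snd (\<beta> ! k)" using assms z pos[of k] by (cases "t = 0") (auto simp: Bridge_def)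
  qed
qed

lemma bcat_Bridge:
  assumes b1: "b1 \<in> Bridge m" and b2: "b2 \<in> Bridge n"
  shows "bcat b1 b2 \<in> Bridge (m+n)"
proof -
  note F1 = Bridge_facts[OF b1] and F2 = Bridge_facts[OF b2]
  let ?c = "bcat b1 b2"
  have N1: "\<And>t. t \<le> m \<Longrightarrow> ?c ! t = b1 ! t" using bcat_nth[OF F1(1) F2(1) F2(2)] by auto
  have N2: "\<And>t. m \<le> t \<Longrightarrow> t \<le> m+n \<Longrightarrow> ?c ! t = tr (b1!m) (b2!(t-m))"
    using bcat_nth2[OF F1(1) F2(1) F2(2)] by auto
  have len: "length ?c = Suc (m+n)" using F1(1) F2(1) by (simp add: bcat_def)
  have z: "?c ! 0 = (0,0)" using N1[of 0] F1(2) by simp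
  have ad: "\<forall>t<m+n. adj (?c ! t) (?c ! Suc t)"
  proof (intro allI impI)
    fix t assume t: "t < m+n"
    show "adj (?c ! t) (?c ! Suc t)"
    proof (cases "t < m")
      case True then show ?thesis using N1[of t] N1[of "Suc t"] F1(3)[OF True] by simp
    next
      case False
      then have "Suc t - m = Suc (t - m)" by auto
      then show ?thesis using N2[of t] N2[of "Suc t"] F2(3)[of "t-m"] False t by simp
    qed
  qed
  have sn2: "\<And>t. m \<le> t \<Longrightarrow> t \<le> m+n \<Longrightarrow> snd (?c!t) = snd (b1!m) + snd (b2!(t-m))"
    using N2 by (simp add: tr_def)
  have dist: "distinct ?c"
    unfolding distinct_conv_nth len
  proof (intro allI impI)
    have key: "\<And>u v. u < v \<Longrightarrow> v \<le> m+n \<Longrightarrow> ?c ! u \<noteq> ?c ! v"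
    proof -
      fix u v assume uv: "u < v" "v \<le> m+n"
      show "?c ! u \<noteq> ?c ! v"
      proof (cases "v \<le> m")
        case True then show ?thesis using N1 F1(4) F1(1) uv by (simp add: nth_eq_iff_index_eq)
      next
        case v: False
        show ?thesis
        proof (cases "m \<le> u")
          case True
          have "b2 ! (u-m) \<noteq> b2 ! (v-m)" using F2(4) F2(1) uv True by (simp add: nth_eq_iff_index_eq)
          then show ?thesis using N2[of u] N2[of v] True uv inj_tr by (simp add: inj_eq)
        next
          case False
          have "snd (?c!u) \<le> snd (b1!m)" using N1[of u] F1(6)[of u] False by simp
          moreover have "0 < snd (b2!(v-m))" using F2(5)[of "v-m"] v uv by simp
          ultimately show ?thesis using sn2[of v] v uv by auto
        qed
      qed
    qed
    fix i j assume "i < Suc (m+n)" "j < Suc (m+n)" "i \<noteq> j"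
    then show "?c ! i \<noteq> ?c ! j" using key[of i j] key[of j i] by (cases "i < j") auto
  qed
  have br: "\<forall>t. 0 < t \<and> t \<le> m+n \<longrightarrow> 0 < snd (?c!t) \<and> snd (?c!t) \<le> snd (?c!(m+n))"
  proof (intro allI impI)
    fix t assume t: "0 < t \<and> t \<le> m+n"
    have top: "snd (?c!(m+n)) = snd (b1!m) + snd (b2!n)" using sn2[of "m+n"] by simp
    show "0 < snd (?c!t) \<and> snd (?c!t) \<le> snd (?c!(m+n))"
    proof (cases "t \<le> m")
      case True
      then show ?thesis using N1[of t] F1(5)[of t] F1(6)[of t] F2(7)[of n] top t by simp
    next
      case False
      then have "0 < snd (b2 ! (t-m))" "snd (b2 ! (t - m)) \<le> snd (b2 ! n)"
        using F2(5)[of "t-m"] F2(6)[of "t-m"] t by auto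
      then show ?thesis using sn2[of t] F1(7)[of m] top t False by simp
    qed
  qed
  show ?thesis unfolding Bridge_def SAW_def using len z ad dist br by auto
qed

lemma Bridge_supermult: "card (Bridge m) * card (Bridge n) \<le> card (Bridge (m+n))"
proof -
  have into: "(\<lambda>(b1,b2). bcat b1 b2) ` (Bridge m \<times> Bridge n) \<subseteq> Bridge (m+n)"
    using bcat_Bridge by auto
  have inj: "inj_on (\<lambda>(b1,b2). bcat b1 b2) (Bridge m \<times> Bridge n)"
  proof (rule inj_onI, clarify)
    fix b1 b2 b1' b2' assume h: "b1 \<in> Bridge m" "b2 \<in> Bridge n" "b1' \<in> Bridge m" "b2' \<in> Bridge n"
      and e: "bcat b1 b2 = bcat b1' b2'"
    note F1 = Bridge_facts[OF h(1)] and F2 = Bridge_facts[OF h(2)]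
    note G1 = Bridge_facts[OF h(3)] and G2 = Bridge_facts[OF h(4)]
    have e1: "b1 = b1'"
    proof (rule nth_equalityI)
      show "length b1 = length b1'" using F1(1) G1(1) by simp
      fix t assume "t < length b1"
      then show "b1 ! t = b1' ! t" using e bcat_nth[OF F1(1) F2(1) F2(2), of t] bcat_nth[OF G1(1) G2(1) G2(2), of t] F1(1)
        by auto
    qed
    have e2: "b2 = b2'"
    proof (rule nth_equalityI)
      show "length b2 = length b2'" using F2(1) G2(1) by simp
      fix t assume t: "t < length b2"
      have "tr (b1!m) (b2!t) = tr (b1'!m) (b2'!t)"
        using e bcat_nth2[OF F1(1) F2(1) F2(2), of "m+t"] bcat_nth2[OF G1(1) G2(1) G2(2), of "m+t"] F2(1) t
        by simp
      then show "b2 ! t = b2' ! t" using e1 inj_tr by (simp add: inj_eq)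
    qed
    show "b1 = b1' \<and> b2 = b2'" using e1 e2 by simp
  qed
  have "card (Bridge m \<times> Bridge n) \<le> card (Bridge (m+n))"
    by (rule card_inj_on_le[OF inj into]) (simp add: finite_Bridge)
  then show ?thesis by (simp add: card_cartesian_product)
qed

lemma Bridge_pow: "card (Bridge m) ^ j \<le> card (Bridge (m*j))"
proof (induction j)
  case 0 then show ?case using card_Bridge_pos[of 0] by simp
next
  case (Suc j)
  have "card (Bridge m) ^ Suc j = card (Bridge m) * card (Bridge m) ^ j" by simp
  also have "\<dots> \<le> card (Bridge m) * card (Bridge (m*j))" using Suc by simp
  also have "\<dots> \<le> card (Bridge (m + m*j))" by (rule Bridge_supermult)
  finally show ?case by (simp add: algebra_simps)
qed



lemma subadd_mult:
  fixes a :: "nat \<Rightarrow> real"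
  assumes sub: "\<And>m n. a (m+n) \<le> a m + a n"
  shows "a (q*m + r) \<le> real q * a m + a r"
proof (induction q)
  case 0 then show ?case by simp
next
  case (Suc q)
  have "a (Suc q * m + r) = a (m + (q*m + r))" by (simp add: algebra_simps)
  also have "\<dots> \<le> a m + a (q*m+r)" by (rule sub)
  also have "\<dots> \<le> a m + (real q * a m + a r)" using Suc by simp
  finally show ?case by (simp add: algebra_simps)
qed

lemma fekete:
  fixes a :: "nat \<Rightarrow> real"
  assumes sub: "\<And>m n. a (m+n) \<le> a m + a n" and nn: "\<And>n. 0 \<le> a n"
  defines "L \<equiv> Inf ((\<lambda>n. a n / real n) ` {1..})"
  shows "(\<lambda>n. a n / real n) \<longlonglongrightarrow> L"
proof (rule LIMSEQ_I)
  fix e :: real assume e: "0 < e"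
  let ?S = "(\<lambda>n. a n / real n) ` {1..}"
  have bdd: "bdd_below ?S" by (rule bdd_belowI[of _ 0]) (auto intro: nn divide_nonneg_nonneg)
  have ne: "?S \<noteq> {}" by auto
  have low: "\<And>n. 1 \<le> n \<Longrightarrow> L \<le> a n / real n" unfolding L_def
    by (rule cInf_lower[OF _ bdd]) auto
  have "L < L + e/2" using e by simp
  then obtain m where m: "1 \<le> m" "a m / real m < L + e/2"
    using cInf_lessD[OF ne, of "L + e/2"] unfolding L_def by auto
  define C where "C = Max (a ` {..<m})"
  have C: "\<And>r. r < m \<Longrightarrow> a r \<le> C" unfolding C_def by (rule Max_ge) auto
  have C0: "0 \<le> C" using C[of 0] nn[of 0] m by simp
  obtain N :: nat where N: "2 * C / e + 1 < N" using reals_Archimedean2 by blast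
  show "\<exists>N. \<forall>n\<ge>N. norm (a n / real n - L) < e"
  proof (intro exI allI impI)
    fix n assume n: "N \<le> n"
    have "0 \<le> 2*C/e" using C0 e by simp
    then have "1 < real N" using N by linarith
    then have n1: "1 \<le> n" using n by linarith
    have npos: "0 < real n" using n1 by simp
    define q where "q = n div m"
    define r where "r = n mod m"
    have nqr: "n = q*m + r" by (simp add: q_def r_def)
    have rm: "r < m" using m by (simp add: r_def)
    have "a n \<le> real q * a m + a r" using subadd_mult[of a q m r, OF sub] nqr by simp
    also have "\<dots> \<le> real q * a m + C" using C[OF rm] by simp
    also have "real q * a m \<le> (real n / real m) * a m"
    proof (rule mult_right_mono)
      have "real q * real m \<le> real n" using nqr by (metis of_nat_le_iff of_nat_mult le_add1)
      then show "real q \<le> real n / real m" using m by (simp add: field_simps)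
    qed (rule nn)
    then have "real q * a m + C \<le> (real n / real m) * a m + C" by simp
    finally have "a n / real n \<le> a m / real m + C / real n" using npos
      by (simp add: field_simps)
    moreover have "C / real n < e / 2"
    proof -
      have "2 * C / e < real n" using N n by linarith
      then have "2 * C < e * real n" using e by (simp add: field_simps)
      then show ?thesis using npos by (simp add: field_simps)
    qed
    ultimately have "a n / real n < L + e" using m by linarith
    moreover have "L \<le> a n / real n" using low n1 by simp
    ultimately show "norm (a n / real n - L) < e" by simp
  qed
qed

lemma card_SAW_pos: "1 \<le> card (SAW k)"
  using card_Bridge_pos[of k] card_Bridge_le_SAW[of k] by linarith

lemma card_SAW0: "card (SAW 0) \<le> 1"
proof -
  have "SAW 0 \<subseteq> {[(0,0)]}"
  proof
    fix \<gamma> assume "\<gamma> \<in> SAW 0"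
    then have "length \<gamma> = 1" "\<gamma>!0 = (0,0)" by (auto simp: SAW_def)
    then show "\<gamma> \<in> {[(0,0)]}" by (cases \<gamma>) auto
  qed
  then show ?thesis by (metis card.empty card.insert card_mono empty_iff finite.intros(1) finite_insert One_nat_def)
qed

definition aS :: "nat \<Rightarrow> real" where "aS n = ln (real (card (SAW n)))"
definition LS :: real where "LS = Inf ((\<lambda>n. aS n / real n) ` {1..})"

lemma aS_nn: "0 \<le> aS n" using card_SAW_pos[of n] by (simp add: aS_def)

lemma aS_sub: "aS (m+n) \<le> aS m + aS n"
proof -
  have p: "0 < real (card (SAW m))" "0 < real (card (SAW n))" using card_SAW_pos by (auto intro: less_le_trans)
  have "real (card (SAW (m+n))) \<le> real (card (SAW m)) * real (card (SAW n))"
    using SAW_submult[of m n] by (metis of_nat_le_iff of_nat_mult)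
  then have "aS (m+n) \<le> ln (real (card (SAW m)) * real (card (SAW n)))"
    unfolding aS_def using card_SAW_pos[of "m+n"] by simp
  then show ?thesis using p by (simp add: aS_def ln_mult)
qed

lemma aS_lim: "(\<lambda>n. aS n / real n) \<longlonglongrightarrow> LS"
  unfolding LS_def by (rule fekete[OF aS_sub aS_nn])

lemma conn_const_eq: "conn_const = exp LS"
proof -
  have ev: "\<forall>\<^sub>F n in sequentially. exp (aS n / real n) = root n (real (card (SAW n)))"
  proof (rule eventually_sequentiallyI[of 1])
    fix n :: nat assume "1 \<le> n"
    moreover have "0 < real (card (SAW n))" using card_SAW_pos[of n] by simp
    ultimately show "exp (aS n / real n) = root n (real (card (SAW n)))"
      by (simp add: root_powr_inverse powr_def aS_def)
  qed
  have "(\<lambda>n. exp (aS n / real n)) \<longlonglongrightarrow> exp LS" by (intro tendsto_exp aS_lim)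
  then have "(\<lambda>n. root n (real (card (SAW n)))) \<longlonglongrightarrow> exp LS" using tendsto_cong[OF ev] by simp
  then show ?thesis unfolding conn_const_def by (rule limI)
qed

lemma Bridge_bound: "real (card (Bridge m)) \<le> conn_const ^ m"
proof (cases "m = 0")
  case True
  then show ?thesis using card_Bridge_le_SAW[of 0] card_SAW0 by simp
next
  case False
  define bm where "bm = real (card (Bridge m))"
  have bm1: "1 \<le> bm" using card_Bridge_pos[of m] by (simp add: bm_def)
  define g where "g = (\<lambda>j. aS (m * Suc j) / real (m * Suc j))"
  have sm: "strict_mono (\<lambda>j. m * Suc j)" using False by (auto simp: strict_mono_def)
  have "g \<longlonglongrightarrow> LS" using LIMSEQ_subseq_LIMSEQ[OF aS_lim sm] by (simp add: g_def o_def)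
  moreover have "\<forall>j\<ge>0. ln bm / real m \<le> g j"
  proof (intro allI impI)
    fix j :: nat
    have "real (card (Bridge m) ^ Suc j) \<le> real (card (SAW (m * Suc j)))"
      using Bridge_pow[of m "Suc j"] card_Bridge_le_SAW[of "m * Suc j"] by (metis le_trans of_nat_le_iff)
    then have "bm ^ Suc j \<le> real (card (SAW (m * Suc j)))" by (simp add: bm_def)
    moreover have "0 < bm ^ Suc j" using bm1 by simp
    ultimately have "ln (bm ^ Suc j) \<le> aS (m * Suc j)" unfolding aS_def
      by (subst ln_le_cancel_iff) (auto intro: less_le_trans)
    moreover have "ln (bm ^ Suc j) = real (Suc j) * ln bm" using bm1 by (intro ln_realpow)
    ultimately have "real (Suc j) * ln bm \<le> aS (m * Suc j)" by simp
    then have "real (Suc j) * ln bm / real (m * Suc j) \<le> aS (m * Suc j) / real (m * Suc j)"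
      using False by (intro divide_right_mono) auto
    moreover have "real (Suc j) * ln bm / real (m * Suc j) = ln bm / real m"
    proof -
      have "real (m * Suc j) = real (Suc j) * real m" by (simp add: algebra_simps)
      then show ?thesis using False by (simp only:) (simp add: field_simps del: of_nat_Suc)
    qed
    ultimately show "ln bm / real m \<le> g j" by (simp add: g_def del: of_nat_Suc)
  qed
  ultimately have "ln bm / real m \<le> LS" by (intro LIMSEQ_le_const) auto
  then have "ln bm \<le> real m * LS" using False by (simp add: field_simps)
  then have "bm \<le> exp (real m * LS)" using bm1 by (metis exp_ln le_less_trans less_eq_real_def exp_le_cancel_iff zero_less_one)
  then show ?thesis by (simp add: bm_def conn_const_eq exp_of_nat_mult)
qed

lemma asym_bound:
  fixes a :: real
  assumes a0: "0 < a" and a1: "a < 1/2"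
  shows "\<forall>\<^sub>F n in sequentially. \<forall>N::nat. real N \<le> 7 * real n powr a \<longrightarrow>
            real (N+1) * ln (real n + 1) \<le> 8 * real n powr a * ln (real n) \<and> N \<le> n"
proof (rule eventually_sequentiallyI[of "nat \<lceil>16 powr (1/a)\<rceil> + 49"])
  fix n :: nat assume n: "nat \<lceil>16 powr (1/a)\<rceil> + 49 \<le> n"
  define p where "p = real n powr a"
  have n49: "49 \<le> real n" using n by linarith
  have n16: "16 powr (1/a) \<le> real n" using n by linarith
  have p16: "16 \<le> p"
  proof -
    have "(16 powr (1/a)) powr a \<le> real n powr a" using n16 a0 by (intro powr_mono2) auto
    moreover have "(16 powr (1/a)) powr a = 16" using a0 by (simp add: powr_powr)
    ultimately show ?thesis by (simp add: p_def)
  qed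
  have psq: "p \<le> sqrt (real n)"
  proof -
    have "real n powr a \<le> real n powr (1/2)" using a1 n49 by (intro powr_mono) auto
    then show ?thesis by (simp add: p_def powr_half_sqrt)
  qed
  have sq7: "7 \<le> sqrt (real n)" using n49 by (intro real_le_rsqrt) simp
  have "7 * sqrt (real n) \<le> sqrt (real n) * sqrt (real n)" using sq7 by (intro mult_right_mono) auto
  then have p7: "7 * p \<le> real n" using psq n49 by simp
  have ln1: "1 \<le> ln (real n)"
  proof -
    have "exp 1 \<le> real n" using exp_le n49 by linarith
    then have "ln (exp 1) \<le> ln (real n)" using n49 by (subst ln_le_cancel_iff) auto
    then show ?thesis by simp
  qed
  have npos: "0 < real n" using n49 by simp
  have lnn1: "ln (real n + 1) \<le> ln (real n) + 1 / real n"
  proof -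
    have "ln ((real n + 1) / real n) \<le> (real n + 1) / real n - 1" using npos by (intro ln_le_minus_one) simp
    moreover have "ln ((real n + 1) / real n) = ln (real n + 1) - ln (real n)" using npos by (simp add: ln_div)
    moreover have "(real n + 1) / real n - 1 = 1 / real n" using npos by (simp add: field_simps)
    ultimately show ?thesis by simp
  qed
  show "\<forall>N::nat. real N \<le> 7 * real n powr a \<longrightarrow>
            real (N+1) * ln (real n + 1) \<le> 8 * real n powr a * ln (real n) \<and> N \<le> n"
  proof (intro allI impI)
    fix N :: nat assume N: "real N \<le> 7 * real n powr a"
    then have N': "real N \<le> 7 * p" by (simp add: p_def)
    have "N \<le> n" using N' p7 by linarith
    have l0: "0 \<le> ln (real n + 1)" using npos by simp
    have "real (N+1) * ln (real n + 1) \<le> (7*p + 1) * ln (real n + 1)"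
      using N' l0 by (intro mult_right_mono) auto
    also have "\<dots> \<le> (7*p + 1) * (ln (real n) + 1 / real n)"
      using lnn1 p16 by (intro mult_left_mono) auto
    also have "\<dots> = 7*p*ln (real n) + ln (real n) + (7*p+1) / real n" by (simp add: field_simps)
    also have "(7*p+1) / real n \<le> 2"
    proof -
      have "7*p + 1 \<le> 2 * real n" using p7 n49 by linarith
      then show ?thesis using npos by (simp add: field_simps)
    qed
    also have "7*p*ln (real n) + ln (real n) + 2 \<le> 8 * p * ln (real n)"
    proof -
      have "16 * ln (real n) \<le> p * ln (real n)" using p16 ln1 by (intro mult_right_mono) auto
      then show ?thesis using ln1 by linarith
    qed
    finally show "real (N+1) * ln (real n + 1) \<le> 8 * real n powr a * ln (real n) \<and> N \<le> n"
      using \<open>N \<le> n\<close> by (simp add: p_def add.assoc)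
  qed
qed

lemma count_FB:
  assumes nbN: "\<And>\<gamma>. \<gamma> \<in> FewBranchHSW \<epsilon> n k \<Longrightarrow> num_branches \<gamma> \<le> N"
  shows "card (FewBranchHSW \<epsilon> n k) \<le> (\<Sum>i\<le>N. (Suc k)^i) * card (Bridge k)"
proof -
  define Lst where "Lst = {xs. set xs \<subseteq> {0..k} \<and> length xs \<le> N}"
  define f where "f = (\<lambda>\<gamma>. (Aof \<gamma>, psi \<gamma>))"
  have into: "f ` FewBranchHSW \<epsilon> n k \<subseteq> Lst \<times> Bridge k"
  proof
    fix p assume "p \<in> f ` FewBranchHSW \<epsilon> n k"
    then obtain \<gamma> where g: "\<gamma> \<in> FewBranchHSW \<epsilon> n k" and p: "p = f \<gamma>" by auto
    have H: "\<gamma> \<in> HSW k" using g by (simp add: FewBranchHSW_def)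
    have "set (Aof \<gamma>) \<subseteq> {0..k}"
      using bpt_le[of \<gamma>] HSW_facts(1)[OF H] by (auto simp: Aof_def)
    moreover have "length (Aof \<gamma>) \<le> N" using nbN[OF g] by (simp add: Aof_def)
    ultimately show "p \<in> Lst \<times> Bridge k" using psi_Bridge[OF H] p by (simp add: f_def Lst_def)
  qed
  have inj: "inj_on f (FewBranchHSW \<epsilon> n k)"
    by (rule inj_onI) (auto simp: f_def FewBranchHSW_def intro: encode_inj)
  have fin: "finite (Lst \<times> Bridge k)" unfolding Lst_def
    by (intro finite_cartesian_product finite_lists_length_le finite_Bridge) simp
  have "card (FewBranchHSW \<epsilon> n k) \<le> card (Lst \<times> Bridge k)" by (rule card_inj_on_le[OF inj into fin])
  also have "\<dots> = (\<Sum>i\<le>N. (Suc k)^i) * card (Bridge k)"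
    by (simp add: card_cartesian_product Lst_def card_lists_length_le)
  finally show ?thesis .
qed

theorem mainTheorem9:
  fixes \<epsilon> :: real
  assumes "0 < \<epsilon>" and "\<epsilon> < 1/2"
  shows "\<forall>\<^sub>F n in sequentially. \<forall>k\<le>n.
           real (card (FewBranchHSW \<epsilon> n k))
             \<le> exp (8 * real n powr (1/2 - \<epsilon>) * ln (real n)) * conn_const ^ k"
proof -
  have a0: "0 < 1/2 - \<epsilon>" and a1: "1/2 - \<epsilon> < 1/2" using assms by auto
  show ?thesis
  proof (rule eventually_mono[OF asym_bound[OF a0 a1]], intro allI impI)
    fix n k :: nat
    assume H: "\<forall>N::nat. real N \<le> 7 * real n powr (1/2 - \<epsilon>) \<longrightarrow>
            real (N+1) * ln (real n + 1) \<le> 8 * real n powr (1/2 - \<epsilon>) * ln (real n) \<and> N \<le> n"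
      and kn: "k \<le> n"
    define x where "x = 7 * real n powr (1/2 - \<epsilon>)"
    define N where "N = nat \<lfloor>x\<rfloor>"
    have x0: "0 \<le> x" by (simp add: x_def)
    have Nx: "real N \<le> x" using x0 by (simp add: N_def)
    have nbN: "\<And>\<gamma>. \<gamma> \<in> FewBranchHSW \<epsilon> n k \<Longrightarrow> num_branches \<gamma> \<le> N"
    proof -
      fix \<gamma> assume "\<gamma> \<in> FewBranchHSW \<epsilon> n k"
      then have "real (num_branches \<gamma>) < x" by (simp add: FewBranchHSW_def x_def)
      then have "int (num_branches \<gamma>) \<le> \<lfloor>x\<rfloor>" by linarith
      then show "num_branches \<gamma> \<le> N" by (simp add: N_def)
    qed
    have HN: "real (N+1) * ln (real n + 1) \<le> 8 * real n powr (1/2 - \<epsilon>) * ln (real n)" "N \<le> n"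
      using H Nx by (auto simp: x_def)
    have mu0: "0 \<le> conn_const ^ k" by (simp add: conn_const_eq)
    have "real (card (FewBranchHSW \<epsilon> n k)) \<le> real ((\<Sum>i\<le>N. (Suc k)^i) * card (Bridge k))"
      using count_FB[of \<epsilon> n k N, OF nbN] by (simp only: of_nat_le_iff)
    also have "\<dots> = real (\<Sum>i\<le>N. (Suc k)^i) * real (card (Bridge k))" by simp
    also have "\<dots> \<le> real (\<Sum>i\<le>N. (Suc k)^i) * conn_const ^ k"
      by (intro mult_left_mono Bridge_bound) (simp only: of_nat_0_le_iff)
    also have "real (\<Sum>i\<le>N. (Suc k)^i) \<le> (real n + 1) ^ (N+1)"
    proof -
      have "(\<Sum>i\<le>N. (Suc k)^i) \<le> card {..N} * (Suc k)^N"
      proof -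
        have "\<And>i. i \<in> {..N} \<Longrightarrow> Suc k ^ i \<le> Suc k ^ N" by (auto intro: power_increasing)
        from sum_bounded_above[where A="{..N}" and f="\<lambda>i. Suc k ^ i" and K="Suc k ^ N", OF this]
        show ?thesis by simp
      qed
      also have "\<dots> = Suc N * (Suc k)^N" by simp
      also have "\<dots> \<le> Suc n * (Suc n)^N" using HN(2) kn by (intro mult_mono power_mono) auto
      finally have "(\<Sum>i\<le>N. (Suc k)^i) \<le> (Suc n)^(N+1)" by simp
      then have "real (\<Sum>i\<le>N. (Suc k)^i) \<le> real ((Suc n)^(N+1))" by (simp only: of_nat_le_iff)
      then show ?thesis by (simp add: algebra_simps)
    qed
    also have "(real n + 1) ^ (N+1) = exp (real (N+1) * ln (real n + 1))"
      by (subst exp_of_nat_mult) simp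
    also have "\<dots> \<le> exp (8 * real n powr (1/2 - \<epsilon>) * ln (real n))" using HN(1) by simp
    finally show "real (card (FewBranchHSW \<epsilon> n k))
             \<le> exp (8 * real n powr (1/2 - \<epsilon>) * ln (real n)) * conn_const ^ k"
      using mu0 by (simp add: mult_right_mono)
  qed
qed


end
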